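(* Let $(X,P)$ be an $(N,s)$-tiling space and let $\epsilon\in(0,1)$. Then $(X^\epsilon,P)$ is an $(N,s^\epsilon)$-tiling space.
   Context: $X^\epsilon$ is the snowflake of $X$: the set $X$ with metric $d_X(x,y)^\epsilon$. $\mathbb{N}=\{0,1,\dots\}$. A covering structure on $X$ is a map $P$ from $\mathbb{N}$ or $\mathbb{Z}$ to coverings of $X$; $P_n$ its value, $\mathrm{dom}(P)$ its domain; $[T]_k=\{A\in P_{n+k}:A\subset T\}$ for $T\in P_n$. $(X,P)$ is an $N$-tiling set if (S1) for $n<m$ in $\mathrm{dom}(P)$, $A\in P_n$: $\mathrm{card}[A]_{m-n}=N^{m-n}$ and $A=\bigcup[A]_{m-n}$; (S2) for $A,B\in P_n$ there exist $m$ and $C\in P_m$ with $A\cup B\subset C$. Tiles are elements of the $P_n$. For $X$ a metric space ($\delta$ = diameter, $U(p,r)$ open ball, $hY$ = $Y$ with metric multiplied by $h$), $s\in(0,\infty)$, an $N$-tiling set is an $(N,s)$-pre-tiling space if (T1) there are $D_1,D_2>0$ with $D_1\le\delta(A)/s^n\le D_2$ for all $n\in\mathrm{dom}(P)$, $A\in P_n$; (T2) there is $E>0$ such that every $A\in P_n$ contains some $p_A$ with $U(p_A,Es^n)\subset A$. It is an $(N,s)$-tiling space if moreover (U) every sequence of tiles $(A_i)$ has a subsequence $(A_{\phi(i)})$ with $\delta(A_{\phi(i)})^{-1}A_{\phi(i)}$ converging in the Gromov–Hausdorff sense to $\delta(T)^{-1}T$ for some tile $T$. *)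

theory Defs
  imports "HOL-Analysis.Analysis"
begin

definition snowflake :: "('a \<Rightarrow> 'a \<Rightarrow> real) \<Rightarrow> real \<Rightarrow> 'a \<Rightarrow> 'a \<Rightarrow> real" where
  "snowflake d \<epsilon> = (\<lambda>x y. d x y powr \<epsilon>)"

text \<open>Diameter (extended real, so that unbounded sets have diameter infinity).\<close>
definition diam :: "('a \<Rightarrow> 'a \<Rightarrow> real) \<Rightarrow> 'a set \<Rightarrow> ereal" where
  "diam d A = (SUP p \<in> A \<times> A. ereal (d (fst p) (snd p)))"

definition oball :: "'a set \<Rightarrow> ('a \<Rightarrow> 'a \<Rightarrow> real) \<Rightarrow> 'a \<Rightarrow> real \<Rightarrow> 'a set" where
  "oball X d p r = {y \<in> X. d p y < r}"

definition hausdorff_distance :: "('b \<Rightarrow> 'b \<Rightarrow> real) \<Rightarrow> 'b set \<Rightarrow> 'b set \<Rightarrow> ereal" where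
  "hausdorff_distance \<rho> U V =
     max (SUP u \<in> U. INF v \<in> V. ereal (\<rho> u v)) (SUP v \<in> V. INF u \<in> U. ereal (\<rho> u v))"

definition admissible_metric ::
  "'a set \<Rightarrow> ('a \<Rightarrow> 'a \<Rightarrow> real) \<Rightarrow> 'b set \<Rightarrow> ('b \<Rightarrow> 'b \<Rightarrow> real)
    \<Rightarrow> ('a + 'b \<Rightarrow> 'a + 'b \<Rightarrow> real) \<Rightarrow> bool" where
  "admissible_metric X dX Y dY \<rho> \<longleftrightarrow>
     Metric_space (X <+> Y) \<rho> \<and>
     (\<forall>x\<in>X. \<forall>x'\<in>X. \<rho> (Inl x) (Inl x') = dX x x') \<and>
     (\<forall>y\<in>Y. \<forall>y'\<in>Y. \<rho> (Inr y) (Inr y') = dY y y')"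

text \<open>Gromov--Hausdorff distance (infimum over admissible metrics on the disjoint union
  of the Hausdorff distance of the two copies; equivalent to the infimum over all
  isometric embeddings into a common metric space).\<close>
definition gh_dist ::
  "'a set \<Rightarrow> ('a \<Rightarrow> 'a \<Rightarrow> real) \<Rightarrow> 'b set \<Rightarrow> ('b \<Rightarrow> 'b \<Rightarrow> real) \<Rightarrow> ereal" where
  "gh_dist X dX Y dY =
     (INF \<rho> \<in> {\<rho>. admissible_metric X dX Y dY \<rho>}. hausdorff_distance \<rho> (Inl ` X) (Inr ` Y))"

definition gh_converges ::
  "(nat \<Rightarrow> 'a set) \<Rightarrow> (nat \<Rightarrow> 'a \<Rightarrow> 'a \<Rightarrow> real) \<Rightarrow> 'b set \<Rightarrow> ('b \<Rightarrow> 'b \<Rightarrow> real) \<Rightarrow> bool" where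
  "gh_converges Xs ds Y dY \<longleftrightarrow> ((\<lambda>i. gh_dist (Xs i) (ds i) Y dY) \<longlonglongrightarrow> 0)"

definition scale_metric :: "real \<Rightarrow> ('a \<Rightarrow> 'a \<Rightarrow> real) \<Rightarrow> 'a \<Rightarrow> 'a \<Rightarrow> real" where
  "scale_metric h d = (\<lambda>x y. h * d x y)"

text \<open>Covering structures: a map P from dom(P) (either N or Z, embedded in int) to coverings.\<close>
definition covering :: "'a set \<Rightarrow> 'a set set \<Rightarrow> bool" where
  "covering X C \<longleftrightarrow> (\<forall>A\<in>C. A \<subseteq> X) \<and> \<Union>C = X"

definition covering_structure :: "'a set \<Rightarrow> int set \<Rightarrow> (int \<Rightarrow> 'a set set) \<Rightarrow> bool" where
  "covering_structure X D P \<longleftrightarrow> (D = {n. 0 \<le> n} \<or> D = UNIV) \<and> (\<forall>n\<in>D. covering X (P n))"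

definition children_at :: "(int \<Rightarrow> 'a set set) \<Rightarrow> int \<Rightarrow> int \<Rightarrow> 'a set \<Rightarrow> 'a set set" where
  "children_at P n k T = {A \<in> P (n + k). A \<subseteq> T}"

definition tiling_set :: "nat \<Rightarrow> 'a set \<Rightarrow> int set \<Rightarrow> (int \<Rightarrow> 'a set set) \<Rightarrow> bool" where
  "tiling_set N X D P \<longleftrightarrow> covering_structure X D P \<and>
     (\<forall>n\<in>D. \<forall>m\<in>D. n < m \<longrightarrow> (\<forall>A\<in>P n.
        finite (children_at P n (m - n) A) \<and>
        card (children_at P n (m - n) A) = N ^ nat (m - n) \<and>
        A = \<Union>(children_at P n (m - n) A))) \<and>
     (\<forall>n\<in>D. \<forall>A\<in>P n. \<forall>B\<in>P n. \<exists>m\<in>D. \<exists>C\<in>P m. A \<union> B \<subseteq> C)"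

definition tiles :: "int set \<Rightarrow> (int \<Rightarrow> 'a set set) \<Rightarrow> 'a set set" where
  "tiles D P = (\<Union>n\<in>D. P n)"

definition pre_tiling_space ::
  "nat \<Rightarrow> real \<Rightarrow> 'a set \<Rightarrow> ('a \<Rightarrow> 'a \<Rightarrow> real) \<Rightarrow> int set \<Rightarrow> (int \<Rightarrow> 'a set set) \<Rightarrow> bool" where
  "pre_tiling_space N s X d D P \<longleftrightarrow>
     Metric_space X d \<and> 0 < s \<and> tiling_set N X D P \<and>
     (\<exists>D1 D2. 0 < D1 \<and> 0 < D2 \<and> (\<forall>n\<in>D. \<forall>A\<in>P n.
        ereal (D1 * s powr of_int n) \<le> diam d A \<and> diam d A \<le> ereal (D2 * s powr of_int n))) \<and>
     (\<exists>E>0. \<forall>n\<in>D. \<forall>A\<in>P n. \<exists>p\<in>A. oball X d p (E * s powr of_int n) \<subseteq> A)"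

definition tiling_space ::
  "nat \<Rightarrow> real \<Rightarrow> 'a set \<Rightarrow> ('a \<Rightarrow> 'a \<Rightarrow> real) \<Rightarrow> int set \<Rightarrow> (int \<Rightarrow> 'a set set) \<Rightarrow> bool" where
  "tiling_space N s X d D P \<longleftrightarrow>
     pre_tiling_space N s X d D P \<and>
     (\<forall>A :: nat \<Rightarrow> 'a set. (\<forall>i. A i \<in> tiles D P) \<longrightarrow>
        (\<exists>\<phi> T. strict_mono \<phi> \<and> T \<in> tiles D P \<and>
           gh_converges (\<lambda>i. A (\<phi> i))
             (\<lambda>i. scale_metric (inverse (real_of_ereal (diam d (A (\<phi> i))))) d)
             T (scale_metric (inverse (real_of_ereal (diam d T))) d)))"

end

theory Submission
  imports Defs
begin
lemma powr_subadd:
  fixes a b e :: real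
  assumes "0 \<le> a" "0 \<le> b" "0 < e" "e \<le> 1"
  shows "(a + b) powr e \<le> a powr e + b powr e"
proof (cases "a + b = 0")
  case True then show ?thesis using assms by auto
next
  case False
  hence ab: "a + b > 0" using assms by auto
  have t: "t \<le> t powr e" if "0 \<le> t" "t \<le> 1" for t :: real
  proof (cases "t = 0")
    case False
    hence "t powr 1 \<le> t powr e" using that assms by (intro powr_mono') auto
    thus ?thesis using that by simp
  qed simp
  have "a / (a+b) \<le> (a/(a+b)) powr e" using assms ab by (intro t) auto
  moreover have "b / (a+b) \<le> (b/(a+b)) powr e" using assms ab by (intro t) auto
  moreover have "a/(a+b) + b/(a+b) = 1" using ab by (simp add: add_divide_distrib[symmetric])
  ultimately have "1 \<le> (a/(a+b)) powr e + (b/(a+b)) powr e"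
    by linarith
  also have "\<dots> = (a powr e + b powr e) / (a+b) powr e"
    using assms ab by (simp add: powr_divide add_divide_distrib)
  finally show ?thesis using ab by (simp add: field_simps)
qed

lemma snow_metric:
  assumes "Metric_space M d" "0 < e" "e \<le> 1"
  shows "Metric_space M (\<lambda>x y. d x y powr e)"
proof -
  interpret Metric_space M d by fact
  show ?thesis
  proof
    fix x y show "0 \<le> d x y powr e" by simp
    show "d x y powr e = d y x powr e" using commute by simp
  next
    fix x y assume "x \<in> M" "y \<in> M"
    then show "(d x y powr e = 0) = (x = y)" by simp
  next
    fix x y z assume xyz: "x \<in> M" "y \<in> M" "z \<in> M"
    have "d x z powr e \<le> (d x y + d y z) powr e"
      using triangle[OF xyz] assms by (intro powr_mono2) auto
    also have "\<dots> \<le> d x y powr e + d y z powr e"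
      using assms by (intro powr_subadd) auto
    finally show "d x z powr e \<le> d x y powr e + d y z powr e" .
  qed
qed
lemma diam_snow:
  assumes nn: "\<And>x y. 0 \<le> d x y" and ne: "A \<noteq> {}" and dm: "diam d A = ereal M" and e: "0 < e"
  shows "diam (\<lambda>x y. d x y powr e) A = ereal (M powr e)"
proof -
  have up: "d x y \<le> M" if "x \<in> A" "y \<in> A" for x y
  proof -
    have "ereal (d x y) \<le> diam d A" unfolding diam_def
      using that by (intro SUP_upper2[of "(x,y)"]) auto
    thus ?thesis using dm by simp
  qed
  have le: "diam (\<lambda>x y. d x y powr e) A \<le> ereal (M powr e)"
    unfolding diam_def
  proof (rule SUP_least)
    fix p assume "p \<in> A \<times> A"
    then show "ereal (d (fst p) (snd p) powr e) \<le> ereal (M powr e)"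
      using up nn e by (auto intro!: powr_mono2)
  qed
  obtain a where a: "a \<in> A" using ne by auto
  have ge0: "ereal 0 \<le> diam (\<lambda>x y. d x y powr e) A"
    unfolding diam_def using a by (intro SUP_upper2[of "(a,a)"]) auto
  then obtain c where c: "diam (\<lambda>x y. d x y powr e) A = ereal c" "0 \<le> c"
    using le by (cases "diam (\<lambda>x y. d x y powr e) A") auto
  have "d x y \<le> c powr (1/e)" if "x \<in> A" "y \<in> A" for x y
  proof -
    have "ereal (d x y powr e) \<le> diam (\<lambda>x y. d x y powr e) A" unfolding diam_def
      using that by (intro SUP_upper2[of "(x,y)"]) auto
    hence "d x y powr e \<le> c" using c by simp
    hence "(d x y powr e) powr (1/e) \<le> c powr (1/e)" using nn e by (intro powr_mono2) auto
    thus ?thesis using e nn[of x y] by (simp add: powr_powr)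
  qed
  hence "diam d A \<le> ereal (c powr (1/e))" unfolding diam_def
    by (intro SUP_least) auto
  hence "M \<le> c powr (1/e)" using dm by simp
  hence "M powr e \<le> (c powr (1/e)) powr e"
    using e up[OF a a] nn[of a a] by (intro powr_mono2) auto
  hence "M powr e \<le> c" using e c by (simp add: powr_powr)
  thus ?thesis using le c by simp
qed

lemma hd_snow:
  assumes nn: "\<And>x y. 0 \<le> \<rho> x y" and e: "0 < e" and h: "hausdorff_distance \<rho> U V < ereal r"
  shows "hausdorff_distance (\<lambda>x y. \<rho> x y powr e) U V \<le> ereal (r powr e)"
proof -
  have h1: "(SUP u \<in> U. INF v \<in> V. ereal (\<rho> u v)) < ereal r"
   and h2: "(SUP v \<in> V. INF u \<in> U. ereal (\<rho> u v)) < ereal r"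
    using h unfolding hausdorff_distance_def by auto
  have "(SUP u \<in> U. INF v \<in> V. ereal (\<rho> u v powr e)) \<le> ereal (r powr e)"
  proof (rule SUP_least)
    fix u assume u: "u \<in> U"
    have "(INF v \<in> V. ereal (\<rho> u v)) < ereal r"
      using h1 u by (meson SUP_upper le_less_trans)
    then obtain v where v: "v \<in> V" "ereal (\<rho> u v) < ereal r"
      by (auto simp: INF_less_iff)
    have "\<rho> u v powr e \<le> r powr e" using v nn e by (intro powr_mono2) auto
    thus "(INF v \<in> V. ereal (\<rho> u v powr e)) \<le> ereal (r powr e)"
      using v by (meson INF_lower ereal_less_eq(3) order_trans)
  qed
  moreover have "(SUP v \<in> V. INF u \<in> U. ereal (\<rho> u v powr e)) \<le> ereal (r powr e)"
  proof (rule SUP_least)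
    fix v assume v: "v \<in> V"
    have "(INF u \<in> U. ereal (\<rho> u v)) < ereal r"
      using h2 v by (meson SUP_upper le_less_trans)
    then obtain u where u: "u \<in> U" "ereal (\<rho> u v) < ereal r"
      by (auto simp: INF_less_iff)
    have "\<rho> u v powr e \<le> r powr e" using u nn e by (intro powr_mono2) auto
    thus "(INF u \<in> U. ereal (\<rho> u v powr e)) \<le> ereal (r powr e)"
      using u by (meson INF_lower ereal_less_eq(3) order_trans)
  qed
  ultimately show ?thesis unfolding hausdorff_distance_def by simp
qed

lemma hd_nonneg:
  assumes nn: "\<And>x y. 0 \<le> \<rho> x y" and ne: "U \<noteq> {}"
  shows "0 \<le> hausdorff_distance \<rho> U V"
proof -
  obtain u where u: "u \<in> U" using ne by auto
  have "0 \<le> (INF v \<in> V. ereal (\<rho> u v))" using nn by (intro INF_greatest) auto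
  also have "\<dots> \<le> (SUP u \<in> U. INF v \<in> V. ereal (\<rho> u v))" using u by (rule SUP_upper)
  finally show ?thesis unfolding hausdorff_distance_def by (simp add: le_max_iff_disj)
qed

lemma gh_nonneg:
  assumes "X \<noteq> {}"
  shows "0 \<le> gh_dist X dX Y dY"
  unfolding gh_dist_def
proof (rule INF_greatest)
  fix \<rho> assume "\<rho> \<in> {\<rho>. admissible_metric X dX Y dY \<rho>}"
  then have "Metric_space (X <+> Y) \<rho>" by (simp add: admissible_metric_def)
  then have "\<And>x y. 0 \<le> \<rho> x y" by (simp add: Metric_space.nonneg)
  then show "0 \<le> hausdorff_distance \<rho> (Inl ` X) (Inr ` Y)"
    using assms by (intro hd_nonneg) auto
qed

lemma gh_snow:
  assumes e: "0 < e" "e \<le> 1" and h: "gh_dist X dX Y dY < ereal r"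
  shows "gh_dist X (\<lambda>x y. dX x y powr e) Y (\<lambda>x y. dY x y powr e) \<le> ereal (r powr e)"
proof -
  from h obtain \<rho> where \<rho>: "admissible_metric X dX Y dY \<rho>"
      "hausdorff_distance \<rho> (Inl ` X) (Inr ` Y) < ereal r"
    unfolding gh_dist_def by (auto simp: INF_less_iff)
  have ms: "Metric_space (X <+> Y) \<rho>" using \<rho> by (simp add: admissible_metric_def)
  then have nn: "\<And>x y. 0 \<le> \<rho> x y" by (simp add: Metric_space.nonneg)
  have adm: "admissible_metric X (\<lambda>x y. dX x y powr e) Y (\<lambda>x y. dY x y powr e) (\<lambda>x y. \<rho> x y powr e)"
    using \<rho> snow_metric[OF ms e] unfolding admissible_metric_def by auto
  have "gh_dist X (\<lambda>x y. dX x y powr e) Y (\<lambda>x y. dY x y powr e)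
      \<le> hausdorff_distance (\<lambda>x y. \<rho> x y powr e) (Inl ` X) (Inr ` Y)"
    unfolding gh_dist_def using adm by (intro INF_lower) auto
  also have "\<dots> \<le> ereal (r powr e)" using hd_snow[OF nn e(1) \<rho>(2)] .
  finally show ?thesis .
qed

lemma gh_conv_snow:
  assumes e: "0 < e" "e \<le> 1" and ne: "\<And>i. Xs i \<noteq> {}"
    and c: "gh_converges Xs ds Y dY"
  shows "gh_converges Xs (\<lambda>i x y. ds i x y powr e) Y (\<lambda>x y. dY x y powr e)"
  unfolding gh_converges_def
proof (rule order_tendstoI)
  fix a :: ereal assume "a < 0"
  then show "\<forall>\<^sub>F i in sequentially. a < gh_dist (Xs i) (\<lambda>x y. ds i x y powr e) Y (\<lambda>x y. dY x y powr e)"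
    using gh_nonneg[OF ne] by (intro always_eventually allI) (blast intro: less_le_trans)
next
  fix a :: ereal assume a: "0 < a"
  obtain b :: real where b: "0 < b" "ereal b < a"
  proof (cases a)
    case (real x) then show ?thesis using a that[of "x/2"] by auto
  next
    case PInf then show ?thesis using that[of 1] by auto
  qed (use a in auto)
  define r where "r = (b/2) powr (1/e)"
  have r: "0 < r" "r powr e = b/2" using b e by (auto simp: r_def powr_powr)
  have "\<forall>\<^sub>F i in sequentially. gh_dist (Xs i) (ds i) Y dY < ereal r"
    using c r unfolding gh_converges_def by (intro order_tendstoD(2)) auto
  then show "\<forall>\<^sub>F i in sequentially. gh_dist (Xs i) (\<lambda>x y. ds i x y powr e) Y (\<lambda>x y. dY x y powr e) < a"
  proof (rule eventually_mono)
    fix i assume "gh_dist (Xs i) (ds i) Y dY < ereal r"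
    from gh_snow[OF e this] r b
    show "gh_dist (Xs i) (\<lambda>x y. ds i x y powr e) Y (\<lambda>x y. dY x y powr e) < a"
      by (smt (verit) ereal_less_eq(3) field_sum_of_halves le_less_trans less_ereal.simps(1))
  qed
qed
lemma powr_less_iff2:
  fixes x r e :: real assumes "0 \<le> x" "0 \<le> r" "0 < e"
  shows "x powr e < r powr e \<longleftrightarrow> x < r"
  using assms by (meson not_le powr_less_mono2 powr_mono2 less_imp_le)

theorem proposition3p13:
  fixes N :: nat and s \<epsilon> :: real and X :: "'a set" and d :: "'a \<Rightarrow> 'a \<Rightarrow> real"
    and D :: "int set" and P :: "int \<Rightarrow> 'a set set"
  assumes "tiling_space N s X d D P"
    and "0 < \<epsilon>" and "\<epsilon> < 1"
  shows "tiling_space N (s powr \<epsilon>) X (snowflake d \<epsilon>) D P"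
proof -
  have e: "0 < \<epsilon>" "\<epsilon> \<le> 1" using assms by auto
  have sf: "snowflake d \<epsilon> = (\<lambda>x y. d x y powr \<epsilon>)" by (simp add: snowflake_def)
  have pt: "pre_tiling_space N s X d D P"
    using assms(1) unfolding tiling_space_def by (rule conjunct1)
  have U: "\<And>A :: nat \<Rightarrow> 'a set. (\<forall>i. A i \<in> tiles D P) \<Longrightarrow>
        (\<exists>\<phi> T. strict_mono \<phi> \<and> T \<in> tiles D P \<and>
           gh_converges (\<lambda>i. A (\<phi> i))
             (\<lambda>i. scale_metric (inverse (real_of_ereal (diam d (A (\<phi> i))))) d)
             T (scale_metric (inverse (real_of_ereal (diam d T))) d))"
    using assms(1) unfolding tiling_space_def by (elim conjE) (erule allE, erule mp, assumption)
  have ms: "Metric_space X d" and s: "0 < s" and ts: "tiling_set N X D P"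
    using pt unfolding pre_tiling_space_def by blast+
  obtain D1 D2 where DD0: "0 < D1" "0 < D2" "\<forall>n\<in>D. \<forall>A\<in>P n.
        ereal (D1 * s powr of_int n) \<le> diam d A \<and> diam d A \<le> ereal (D2 * s powr of_int n)"
    using pt unfolding pre_tiling_space_def by (elim conjE exE) blast
  have DD: "0 < D1" "0 < D2" "\<And>n A. n \<in> D \<Longrightarrow> A \<in> P n \<Longrightarrow>
        ereal (D1 * s powr of_int n) \<le> diam d A \<and> diam d A \<le> ereal (D2 * s powr of_int n)"
    using DD0 by auto
  obtain E where E0: "E > 0" "\<forall>n\<in>D. \<forall>A\<in>P n. \<exists>p\<in>A. oball X d p (E * s powr of_int n) \<subseteq> A"
    using pt unfolding pre_tiling_space_def by (elim conjE exE) blast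
  have E: "E > 0" "\<And>n A. n \<in> D \<Longrightarrow> A \<in> P n \<Longrightarrow> \<exists>p\<in>A. oball X d p (E * s powr of_int n) \<subseteq> A"
    using E0 by auto
  have nn: "\<And>x y. 0 \<le> d x y" using ms by (simp add: Metric_space.nonneg)
  have tile: "A \<noteq> {} \<and> diam d A = ereal (real_of_ereal (diam d A)) \<and>
      D1 * s powr of_int n \<le> real_of_ereal (diam d A) \<and> real_of_ereal (diam d A) \<le> D2 * s powr of_int n"
    if "n \<in> D" "A \<in> P n" for n A
  proof -
    have b: "ereal (D1 * s powr of_int n) \<le> diam d A" "diam d A \<le> ereal (D2 * s powr of_int n)"
      using DD(3)[OF that] by auto
    have pos: "0 < D1 * s powr of_int n" using DD s by simp
    have "A \<noteq> {}"
    proof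
      assume "A = {}"
      then have "diam d A = -\<infinity>" by (simp add: diam_def bot_ereal_def)
      then show False using b pos by simp
    qed
    moreover obtain M where "diam d A = ereal M" using b pos
      by (cases "diam d A") auto
    ultimately show ?thesis using b by auto
  qed
  have dsnow: "diam (snowflake d \<epsilon>) A = ereal (real_of_ereal (diam d A) powr \<epsilon>)"
    if "n \<in> D" "A \<in> P n" for n A
    unfolding sf using tile[OF that] by (intro diam_snow[OF nn _ _ e(1)]) auto
  have pre: "pre_tiling_space N (s powr \<epsilon>) X (snowflake d \<epsilon>) D P"
    unfolding pre_tiling_space_def
  proof (intro conjI)
    show "Metric_space X (snowflake d \<epsilon>)" unfolding sf using snow_metric[OF ms e] .
    show "0 < s powr \<epsilon>" using s by simp
    show "tiling_set N X D P" by fact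
    have pw: "(s powr \<epsilon>) powr of_int n = (s powr of_int n) powr \<epsilon>" for n
      by (simp add: powr_powr mult.commute)
    show "\<exists>D1 D2. 0 < D1 \<and> 0 < D2 \<and> (\<forall>n\<in>D. \<forall>A\<in>P n.
        ereal (D1 * (s powr \<epsilon>) powr of_int n) \<le> diam (snowflake d \<epsilon>) A \<and>
        diam (snowflake d \<epsilon>) A \<le> ereal (D2 * (s powr \<epsilon>) powr of_int n))"
    proof (intro exI conjI ballI)
      show "0 < D1 powr \<epsilon>" "0 < D2 powr \<epsilon>" using DD by auto
      fix n A assume nA: "n \<in> D" "A \<in> P n"
      note t = tile[OF nA]
      have "D1 powr \<epsilon> * (s powr \<epsilon>) powr of_int n = (D1 * s powr of_int n) powr \<epsilon>"
        using DD s by (simp add: pw powr_mult)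
      also have "\<dots> \<le> real_of_ereal (diam d A) powr \<epsilon>"
        using t DD s e by (intro powr_mono2) auto
      finally show "ereal (D1 powr \<epsilon> * (s powr \<epsilon>) powr of_int n) \<le> diam (snowflake d \<epsilon>) A"
        using dsnow[OF nA] by simp
      have "real_of_ereal (diam d A) powr \<epsilon> \<le> (D2 * s powr of_int n) powr \<epsilon>"
      proof (rule powr_mono2)
        have "D1 * s powr of_int n > 0" using DD s by simp
        then show "0 \<le> real_of_ereal (diam d A)" using t by linarith
      qed (use t e in auto)
      also have "\<dots> = D2 powr \<epsilon> * (s powr \<epsilon>) powr of_int n"
        using DD s by (simp add: pw powr_mult)
      finally show "diam (snowflake d \<epsilon>) A \<le> ereal (D2 powr \<epsilon> * (s powr \<epsilon>) powr of_int n)"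
        using dsnow[OF nA] by simp
    qed
    show "\<exists>E>0. \<forall>n\<in>D. \<forall>A\<in>P n. \<exists>p\<in>A. oball X (snowflake d \<epsilon>) p (E * (s powr \<epsilon>) powr of_int n) \<subseteq> A"
    proof (intro exI conjI ballI)
      show "0 < E powr \<epsilon>" using E by simp
      fix n A assume nA: "n \<in> D" "A \<in> P n"
      obtain p where p: "p \<in> A" "oball X d p (E * s powr of_int n) \<subseteq> A" using E(2)[OF nA] by blast
      have r: "E powr \<epsilon> * (s powr \<epsilon>) powr of_int n = (E * s powr of_int n) powr \<epsilon>"
        using E s by (simp add: pw powr_mult)
      have "oball X (snowflake d \<epsilon>) p (E powr \<epsilon> * (s powr \<epsilon>) powr of_int n) = oball X d p (E * s powr of_int n)"
        unfolding oball_def sf r using nn e E s by (simp add: powr_less_iff2)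
      then show "\<exists>p\<in>A. oball X (snowflake d \<epsilon>) p (E powr \<epsilon> * (s powr \<epsilon>) powr of_int n) \<subseteq> A"
        using p by auto
    qed
  qed
  have scl: "scale_metric (inverse (real_of_ereal (diam (snowflake d \<epsilon>) B))) (snowflake d \<epsilon>)
      = (\<lambda>x y. scale_metric (inverse (real_of_ereal (diam d B))) d x y powr \<epsilon>)"
    and bne: "B \<noteq> {}"
    if Bt: "B \<in> tiles D P" for B
  proof -
    obtain n where nB: "n \<in> D" "B \<in> P n" using Bt unfolding tiles_def by blast
    have M: "0 \<le> real_of_ereal (diam d B)"
    proof -
      have "D1 * s powr of_int n > 0" using DD s by simp
      then show ?thesis using tile[OF nB] by linarith
    qed
    show "B \<noteq> {}" using tile[OF nB] by blast
    show "scale_metric (inverse (real_of_ereal (diam (snowflake d \<epsilon>) B))) (snowflake d \<epsilon>)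
      = (\<lambda>x y. scale_metric (inverse (real_of_ereal (diam d B))) d x y powr \<epsilon>)"
      unfolding dsnow[OF nB] using M nn
      by (intro ext) (simp add: scale_metric_def sf powr_mult inverse_powr)
  qed
  show ?thesis unfolding tiling_space_def
  proof (intro conjI allI impI)
    show "pre_tiling_space N (s powr \<epsilon>) X (snowflake d \<epsilon>) D P" by fact
    fix A :: "nat \<Rightarrow> 'a set" assume A: "\<forall>i. A i \<in> tiles D P"
    obtain \<phi> T where \<phi>: "strict_mono \<phi>" "T \<in> tiles D P" "gh_converges (\<lambda>i. A (\<phi> i))
             (\<lambda>i. scale_metric (inverse (real_of_ereal (diam d (A (\<phi> i))))) d)
             T (scale_metric (inverse (real_of_ereal (diam d T))) d)"
      using U[OF A] by blast
    have "gh_converges (\<lambda>i. A (\<phi> i))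
             (\<lambda>i x y. scale_metric (inverse (real_of_ereal (diam d (A (\<phi> i))))) d x y powr \<epsilon>)
             T (\<lambda>x y. scale_metric (inverse (real_of_ereal (diam d T))) d x y powr \<epsilon>)"
      using A by (intro gh_conv_snow[OF e _ \<phi>(3)] bne) auto
    then have "gh_converges (\<lambda>i. A (\<phi> i))
             (\<lambda>i. scale_metric (inverse (real_of_ereal (diam (snowflake d \<epsilon>) (A (\<phi> i))))) (snowflake d \<epsilon>))
             T (scale_metric (inverse (real_of_ereal (diam (snowflake d \<epsilon>) T))) (snowflake d \<epsilon>))"
      using A \<phi>(2) by (simp add: scl)
    then show "\<exists>\<phi> T. strict_mono \<phi> \<and> T \<in> tiles D P \<and>
           gh_converges (\<lambda>i. A (\<phi> i))
             (\<lambda>i. scale_metric (inverse (real_of_ereal (diam (snowflake d \<epsilon>) (A (\<phi> i))))) (snowflake d \<epsilon>))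
             T (scale_metric (inverse (real_of_ereal (diam (snowflake d \<epsilon>) T))) (snowflake d \<epsilon>))"
      using \<phi>(1,2) by blast
  qed
qed
end
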